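(* For every integer $m\geq 3$, the graph $C[m]\times P[2]$ is antimagic.
   Context: All graphs are finite, undirected and simple. $C[m]$ denotes the cycle on $m$ vertices and $P[2]$ the path on $2$ vertices (a single edge). The Cartesian product $G_1\times G_2$ of graphs $G_1=(V_1,E_1)$ and $G_2=(V_2,E_2)$ has vertex set $V_1\times V_2$, with $(u_1,u_2)$ adjacent to $(v_1,v_2)$ iff either $u_1=v_1$ and $u_2v_2\in E_2$, or $u_2=v_2$ and $u_1v_1\in E_1$. An antimagic labeling of a graph with $m'$ edges is a bijection $f$ from its edge set to $\{1,\ldots,m'\}$ such that the vertex sums $f^+(v)=\sum_{e\ni v} f(e)$ (sum over edges incident with $v$) are pairwise distinct over all vertices $v$. A graph is antimagic if it admits an antimagic labeling. *)

theory Defs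
  imports Main
begin

text \<open>Graphs are given by a finite vertex set V and an edge set E of 2-element subsets of V.\<close>

definition vertex_sum :: "'a set set \<Rightarrow> ('a set \<Rightarrow> nat) \<Rightarrow> 'a \<Rightarrow> nat" where
  "vertex_sum E f v = (\<Sum>e\<in>{e\<in>E. v \<in> e}. f e)"

definition antimagic_labeling :: "'a set \<Rightarrow> 'a set set \<Rightarrow> ('a set \<Rightarrow> nat) \<Rightarrow> bool" where
  "antimagic_labeling V E f \<longleftrightarrow>
     bij_betw f E {1..card E} \<and> inj_on (vertex_sum E f) V"

definition antimagic :: "'a set \<Rightarrow> 'a set set \<Rightarrow> bool" where
  "antimagic V E \<longleftrightarrow> (\<exists>f. antimagic_labeling V E f)"

definition cycle_edges :: "nat \<Rightarrow> nat set set" where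
  "cycle_edges m = {{i, (i + 1) mod m} | i. i < m}"

definition path2_edges :: "nat set set" where
  "path2_edges = {{0, 1}}"

definition cart_prod_vertices :: "'a set \<Rightarrow> 'b set \<Rightarrow> ('a \<times> 'b) set" where
  "cart_prod_vertices V1 V2 = V1 \<times> V2"

definition cart_prod_edges ::
  "'a set \<Rightarrow> 'a set set \<Rightarrow> 'b set \<Rightarrow> 'b set set \<Rightarrow> ('a \<times> 'b) set set" where
  "cart_prod_edges V1 E1 V2 E2 =
     {{(u1, u2), (v1, v2)} | u1 u2 v1 v2.
        u1 \<in> V1 \<and> u2 \<in> V2 \<and> v1 \<in> V1 \<and> v2 \<in> V2 \<and>
        ((u1 = v1 \<and> {u2, v2} \<in> E2) \<or> (u2 = v2 \<and> {u1, v1} \<in> E1))}"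

end

theory Submission
  imports Defs
begin
definition nx :: "nat \<Rightarrow> nat \<Rightarrow> nat" where "nx m i = (if Suc i = m then 0 else Suc i)"
definition outer :: "nat \<Rightarrow> nat \<Rightarrow> (nat\<times>nat) set" where "outer m i = {(i,0),(nx m i,0)}"
definition inner :: "nat \<Rightarrow> nat \<Rightarrow> (nat\<times>nat) set" where "inner m i = {(i,1),(nx m i,1)}"
definition spoke :: "nat \<Rightarrow> (nat\<times>nat) set" where "spoke i = {(i,0),(i,1)}"

lemma nx_mod: "i < m \<Longrightarrow> (i+1) mod m = nx m i"
  by (simp add: nx_def)

lemma memE: assumes "m \<ge> 3"
  shows "x \<in> cart_prod_edges {0..<m} (cycle_edges m) {0, 1} path2_edges \<longleftrightarrow>
   (\<exists>i<m. x = outer m i \<or> x = spoke i \<or> x = inner m i)"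
proof
  assume "x \<in> cart_prod_edges {0..<m} (cycle_edges m) {0, 1} path2_edges"
  then obtain u1 u2 v1 v2 where x: "x = {(u1, u2), (v1, v2)}" and c: "u1 < m" "u2 \<in> {0,1::nat}" "v1 < m" "v2 \<in> {0,1}"
    and d: "(u1 = v1 \<and> {u2, v2} \<in> path2_edges) \<or> (u2 = v2 \<and> {u1, v1} \<in> cycle_edges m)"
    unfolding cart_prod_edges_def by auto
  from d show "\<exists>i<m. x = outer m i \<or> x = spoke i \<or> x = inner m i"
  proof
    assume "u1 = v1 \<and> {u2, v2} \<in> path2_edges"
    then have "u1 = v1" "(u2 = 0 \<and> v2 = 1) \<or> (u2 = 1 \<and> v2 = 0)" unfolding path2_edges_def by (auto simp: doubleton_eq_iff)
    then have "x = spoke u1" using x unfolding spoke_def by blast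
    then show ?thesis using c by blast
  next
    assume "u2 = v2 \<and> {u1, v1} \<in> cycle_edges m"
    then obtain i where i: "i < m" "u2 = v2" "{u1,v1} = {i, nx m i}" unfolding cycle_edges_def using nx_mod by auto
    then have "(u1 = i \<and> v1 = nx m i) \<or> (u1 = nx m i \<and> v1 = i)" by (auto simp: doubleton_eq_iff)
    moreover have "x = {(u1,u2),(v1,u2)}" using x i by simp
    moreover have "u2 = 0 \<or> u2 = 1" using c by auto
    ultimately have "x = outer m i \<or> x = inner m i" unfolding outer_def inner_def by blast
    then show ?thesis using i by blast
  qed
next
  assume "\<exists>i<m. x = outer m i \<or> x = spoke i \<or> x = inner m i"
  then obtain i where i: "i < m" "x = outer m i \<or> x = spoke i \<or> x = inner m i" by blast
  have nxl: "nx m i < m" using i by (simp add: nx_def)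
  have ce: "{i, nx m i} \<in> cycle_edges m" unfolding cycle_edges_def using i nx_mod[OF i(1)] by auto
  have pe: "{0::nat,1} \<in> path2_edges" by (simp add: path2_edges_def)
  show "x \<in> cart_prod_edges {0..<m} (cycle_edges m) {0, 1} path2_edges"
    using i(2)
  proof (elim disjE)
    assume "x = outer m i" then show ?thesis unfolding cart_prod_edges_def mem_Collect_eq
      apply (rule_tac x=i in exI, rule_tac x=0 in exI, rule_tac x="nx m i" in exI, rule_tac x=0 in exI)
      using i(1) nxl ce by (simp add: outer_def)
  next
    assume "x = spoke i" then show ?thesis unfolding cart_prod_edges_def mem_Collect_eq
      apply (rule_tac x=i in exI, rule_tac x=0 in exI, rule_tac x="i" in exI, rule_tac x=1 in exI)
      using i(1) pe by (simp add: spoke_def)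
  next
    assume "x = inner m i" then show ?thesis unfolding cart_prod_edges_def mem_Collect_eq
      apply (rule_tac x=i in exI, rule_tac x=1 in exI, rule_tac x="nx m i" in exI, rule_tac x=1 in exI)
      using i(1) nxl ce by (simp add: inner_def)
  qed
qed
definition g :: "nat \<Rightarrow> nat \<Rightarrow> (nat\<times>nat) set" where
  "g m k = (if k \<le> m then outer m (k-1) else if k \<le> 2*m then spoke (2*m-k) else inner m (k-2*m-1))"

lemma nxnx: "m \<ge> 3 \<Longrightarrow> i < m \<Longrightarrow> nx m (nx m i) \<noteq> i"
  by (auto simp: nx_def)

lemma outer_inj: assumes "m \<ge> 3" "i < m" "j < m" "outer m i = outer m j" shows "i = j"
proof -
  from assms(4) have "(i = j \<and> nx m i = nx m j) \<or> (i = nx m j \<and> nx m i = j)"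
    unfolding outer_def by (auto simp: doubleton_eq_iff)
  then show ?thesis using nxnx[OF assms(1) assms(3)] by auto
qed

lemma inner_inj: assumes "m \<ge> 3" "i < m" "j < m" "inner m i = inner m j" shows "i = j"
proof -
  from assms(4) have "(i = j \<and> nx m i = nx m j) \<or> (i = nx m j \<and> nx m i = j)"
    unfolding inner_def by (auto simp: doubleton_eq_iff)
  then show ?thesis using nxnx[OF assms(1) assms(3)] by auto
qed

lemma spoke_inj: "spoke i = spoke j \<Longrightarrow> i = j"
  unfolding spoke_def by (auto simp: doubleton_eq_iff)

lemma distinct3: "outer m i \<noteq> spoke j" "outer m i \<noteq> inner m j" "spoke j \<noteq> inner m i"
  unfolding outer_def spoke_def inner_def by (auto simp: doubleton_eq_iff)

lemma g_inj: assumes "m \<ge> 3" shows "inj_on (g m) {1..3*m}"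
proof (rule inj_onI)
  fix k l assume k: "k \<in> {1..3*m}" and l: "l \<in> {1..3*m}" and e: "g m k = g m l"
  show "k = l"
  proof (cases "k \<le> m")
    case True
    then show ?thesis
    proof (cases "l \<le> m")
      case True
      then have "k - 1 = l - 1" using \<open>k \<le> m\<close> e k l outer_inj[OF assms, of "k-1" "l-1"] by (auto simp: g_def)
      moreover have "1 \<le> k" "1 \<le> l" using k l by auto
      ultimately show ?thesis by linarith
    next
      case False
      then show ?thesis using \<open>k \<le> m\<close> e distinct3 distinct3[THEN not_sym] by (auto simp: g_def split: if_splits)
    qed
  next
    case False
    then show ?thesis
    proof (cases "k \<le> 2*m")
      case True
      then show ?thesis using \<open>\<not> k \<le> m\<close> e k l spoke_inj[of "2*m-k" "2*m-l"] distinct3 distinct3[THEN not_sym]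
        by (auto simp: g_def split: if_splits)
    next
      case False
      then have "\<not> l \<le> 2*m" using \<open>\<not> k \<le> m\<close> e distinct3 distinct3[THEN not_sym]
        by (auto simp: g_def split: if_splits)
      then have "k-2*m-1 = l-2*m-1" using False \<open>\<not> k \<le> m\<close> e k l inner_inj[OF assms, of "k-2*m-1" "l-2*m-1"]
        by (auto simp: g_def split: if_splits)
      then show ?thesis using False \<open>\<not> l \<le> 2*m\<close> by linarith
    qed
  qed
qed

lemma E_eq: assumes "m \<ge> 3"
  shows "cart_prod_edges {0..<m} (cycle_edges m) {0, 1} path2_edges = g m ` {1..3*m}"
proof (rule set_eqI)
  fix x
  have "(\<exists>i<m. x = outer m i \<or> x = spoke i \<or> x = inner m i) \<longleftrightarrow> x \<in> g m ` {1..3*m}"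
  proof
    assume "\<exists>i<m. x = outer m i \<or> x = spoke i \<or> x = inner m i"
    then obtain i where i: "i < m" "x = outer m i \<or> x = spoke i \<or> x = inner m i" by blast
    from i(2) show "x \<in> g m ` {1..3*m}"
    proof (elim disjE)
      assume "x = outer m i" then have "x = g m (i+1)" using i(1) by (simp add: g_def)
      then show ?thesis using i(1) by auto
    next
      assume "x = spoke i" moreover have "\<not> 2*m-i \<le> m" "2*m-i \<le> 2*m" "2*m-(2*m-i) = i" using i(1) by arith+
      ultimately have "x = g m (2*m-i)" by (simp add: g_def)
      moreover have "2*m-i \<in> {1..3*m}" using i(1) by auto
      ultimately show ?thesis by blast
    next
      assume "x = inner m i" then have "x = g m (2*m+i+1)" using i(1) by (simp add: g_def)
      then show ?thesis using i(1) by auto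
    qed
  next
    assume "x \<in> g m ` {1..3*m}"
    then obtain k where k: "k \<in> {1..3*m}" "x = g m k" by blast
    show "\<exists>i<m. x = outer m i \<or> x = spoke i \<or> x = inner m i"
    proof (cases "k \<le> m")
      case True then show ?thesis using k by (rule_tac x="k-1" in exI) (auto simp: g_def)
    next
      case False
      show ?thesis
      proof (cases "k \<le> 2*m")
        case True then show ?thesis using k False by (rule_tac x="2*m-k" in exI) (auto simp: g_def)
      next
        case F2: False then show ?thesis using k False by (rule_tac x="k-2*m-1" in exI) (auto simp: g_def)
      qed
    qed
  qed
  then show "x \<in> cart_prod_edges {0..<m} (cycle_edges m) {0, 1} path2_edges \<longleftrightarrow> x \<in> g m ` {1..3*m}"
    using memE[OF assms] by simp
qed

lemma K00: assumes "m \<ge> 3" shows "{k\<in>{1..3*m}. (0,0) \<in> g m k} = {1, m, 2*m}"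
  using assms by (auto simp: g_def outer_def spoke_def inner_def nx_def split: if_splits)
lemma Ki0: assumes "m \<ge> 3" "0 < i" "i < m" shows "{k\<in>{1..3*m}. (i,0) \<in> g m k} = {i+1, i, 2*m-i}"
  using assms by (auto simp: g_def outer_def spoke_def inner_def nx_def split: if_splits)
lemma K01: assumes "m \<ge> 3" shows "{k\<in>{1..3*m}. (0,1) \<in> g m k} = {2*m+1, 3*m, 2*m}"
  using assms by (auto simp: g_def outer_def spoke_def inner_def nx_def split: if_splits)
lemma Ki1: assumes "m \<ge> 3" "0 < i" "i < m" shows "{k\<in>{1..3*m}. (i,1) \<in> g m k} = {2*m+i+1, 2*m+i, 2*m-i}"
  using assms by (auto simp: g_def outer_def spoke_def inner_def nx_def split: if_splits)


lemma vsum: assumes "m \<ge> 3"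
  shows "vertex_sum (g m ` {1..3*m}) (inv_into {1..3*m} (g m)) v = \<Sum> {k\<in>{1..3*m}. v \<in> g m k}"
proof -
  let ?K = "{k\<in>{1..3*m}. v \<in> g m k}"
  have "{e \<in> g m ` {1..3*m}. v \<in> e} = g m ` ?K" by auto
  moreover have "inj_on (g m) ?K" using g_inj[OF assms] by (rule inj_on_subset) auto
  ultimately have "vertex_sum (g m ` {1..3*m}) (inv_into {1..3*m} (g m)) v
     = (\<Sum>k\<in>?K. inv_into {1..3*m} (g m) (g m k))"
    unfolding vertex_sum_def by (simp add: sum.reindex)
  also have "\<dots> = (\<Sum>k\<in>?K. k)"
  proof (rule sum.cong[OF refl])
    fix k assume "k \<in> ?K"
    then have "k \<in> {1..3*m}" by blast
    then show "inv_into {1..3*m} (g m) (g m k) = k" by (rule inv_into_f_f[OF g_inj[OF assms]])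
  qed
  finally show ?thesis by simp
qed

lemma vsum_val: assumes "m \<ge> 3" "i < m" "j \<in> {0,1::nat}"
  shows "vertex_sum (g m ` {1..3*m}) (inv_into {1..3*m} (g m)) (i,j) = 2*m+1+(if i = 0 then m else i) + 4*m*j"
proof -
  consider "i = 0" "j = 0" | "i > 0" "j = 0" | "i = 0" "j = 1" | "i > 0" "j = 1" using assms(3) by auto
  then show ?thesis
  proof cases
    case 1
    have "vertex_sum (g m ` {1..3*m}) (inv_into {1..3*m} (g m)) (0,0) = \<Sum> {1, m, 2*m}"
      by (simp only: vsum[OF assms(1)] K00[OF assms(1)])
    then show ?thesis using 1 assms by simp
  next
    case 2
    have "vertex_sum (g m ` {1..3*m}) (inv_into {1..3*m} (g m)) (i,0) = \<Sum> {i+1, i, 2*m-i}"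
      by (simp only: vsum[OF assms(1)] Ki0[OF assms(1) 2(1) assms(2)])
    then show ?thesis using 2 assms by simp
  next
    case 3
    have "vertex_sum (g m ` {1..3*m}) (inv_into {1..3*m} (g m)) (0,1) = \<Sum> {2*m+1, 3*m, 2*m}"
      by (simp only: vsum[OF assms(1)] K01[OF assms(1)])
    then show ?thesis using 3 assms by simp
  next
    case 4
    have "vertex_sum (g m ` {1..3*m}) (inv_into {1..3*m} (g m)) (i,1) = \<Sum> {2*m+i+1, 2*m+i, 2*m-i}"
      by (simp only: vsum[OF assms(1)] Ki1[OF assms(1) 4(1) assms(2)])
    then show ?thesis using 4 assms by simp
  qed
qed

theorem lemma4p2:
  fixes m :: nat
  assumes "m \<ge> 3"
  shows "antimagic (cart_prod_vertices {0..<m} {0, 1})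
                   (cart_prod_edges {0..<m} (cycle_edges m) {0, 1} path2_edges)"
proof -
  have bij: "bij_betw (g m) {1..3*m} (g m ` {1..3*m})" using g_inj[OF assms] by (simp add: bij_betw_def)
  have card: "card (g m ` {1..3*m}) = 3*m" using card_image[OF g_inj[OF assms]] by simp
  have b2: "bij_betw (inv_into {1..3*m} (g m)) (g m ` {1..3*m}) {1..card (g m ` {1..3*m})}"
    using bij_betw_inv_into[OF bij] card by simp
  have inj: "inj_on (vertex_sum (g m ` {1..3*m}) (inv_into {1..3*m} (g m))) ({0..<m} \<times> {0,1})"
  proof (rule inj_onI)
    fix x y assume x: "x \<in> {0..<m} \<times> {0,1::nat}" and y: "y \<in> {0..<m} \<times> {0,1::nat}"
      and e: "vertex_sum (g m ` {1..3*m}) (inv_into {1..3*m} (g m)) x = vertex_sum (g m ` {1..3*m}) (inv_into {1..3*m} (g m)) y"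
    obtain i j where ij: "x = (i,j)" "i < m" "j \<in> {0,1}" using x by auto
    obtain i' j' where ij': "y = (i',j')" "i' < m" "j' \<in> {0,1}" using y by auto
    have "2*m+1+(if i = 0 then m else i) + 4*m*j = 2*m+1+(if i' = 0 then m else i') + 4*m*j'"
      using e vsum_val[OF assms ij(2,3)] vsum_val[OF assms ij'(2,3)] ij(1) ij'(1) by simp
    then have "j = j' \<and> (if i = 0 then m else i) = (if i' = 0 then m else i')"
      using ij ij' assms by (auto split: if_splits)
    then have "j = j' \<and> i = i'" using ij ij' by (auto split: if_splits)
    then show "x = y" using ij ij' by simp
  qed
  show ?thesis
    unfolding antimagic_def antimagic_labeling_def cart_prod_vertices_def E_eq[OF assms]
    using b2 inj by blast
qed
end
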